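(* Let $K$ be a real biquadratic field with quadratic subfields $k_1,k_2,k_3$ whose fundamental units $\epsilon_1,\epsilon_2,\epsilon_3$ all have norm $-1$ (to $\mathbb{Q}$). Let $E_K$ be the unit group of $K$. Then (1) $E_K=\langle -1,\epsilon_1,\epsilon_2,\epsilon_3\rangle$ if and only if the unit signature rank of $K$ is $3$; equivalently, (2) $E_K=\langle -1,\epsilon_1,\epsilon_2,\sqrt{\epsilon_1\epsilon_2\epsilon_3}\rangle$ if and only if the unit signature rank of $K$ is $4$.
   Context: For a totally real field $F$ of degree $n$ and $0\neq\alpha\in F$, the signature of $\alpha$ is the vector in $\mathbb{F}_2^n$ whose entry at a real embedding $v$ is $0$ if $v(\alpha)>0$ and $1$ if $v(\alpha)<0$. The signatures of the units of $F$ form a subspace of $\mathbb{F}_2^n$ (the unit signature group); its dimension is the unit signature rank of $F$, and the deficiency $\delta(F)$ is $n$ minus the unit signature rank. *)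

theory Defs
  imports "HOL-Analysis.Analysis" "HOL-Library.Z2" "HOL-Library.Function_Algebras" "HOL-Computational_Algebra.Polynomial"
begin

text \<open>Number fields are realised concretely as subsets of the reals.\<close>

definition is_int_square :: "int \<Rightarrow> bool" where
  "is_int_square d \<longleftrightarrow> (\<exists>k::int. d = k ^ 2)"

definition real_biquadratic :: "int \<Rightarrow> int \<Rightarrow> bool" where
  "real_biquadratic m n \<longleftrightarrow> m > 0 \<and> n > 0 \<and> \<not> is_int_square m \<and> \<not> is_int_square n
      \<and> \<not> is_int_square (m * n)"

definition biquad_field :: "int \<Rightarrow> int \<Rightarrow> real set" where
  "biquad_field m n = {of_rat a + of_rat b * sqrt (of_int m) + of_rat c * sqrt (of_int n)
      + of_rat d * sqrt (of_int (m * n)) | a b c d. True}"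

definition quad_field :: "int \<Rightarrow> real set" where
  "quad_field d = {of_rat a + of_rat b * sqrt (of_int d) | a b. True}"

definition quad_conj :: "int \<Rightarrow> real \<Rightarrow> real" where
  "quad_conj d x = (THE y. \<exists>a b. x = of_rat a + of_rat b * sqrt (of_int d)
                              \<and> y = of_rat a - of_rat b * sqrt (of_int d))"

definition quad_norm :: "int \<Rightarrow> real \<Rightarrow> real" where
  "quad_norm d x = x * quad_conj d x"

definition algebraic_int :: "real \<Rightarrow> bool" where
  "algebraic_int x \<longleftrightarrow> (\<exists>p :: int poly. lead_coeff p = 1 \<and> poly (map_poly of_int p) x = 0)"

definition units_of :: "real set \<Rightarrow> real set" where
  "units_of F = {u \<in> F. u \<noteq> 0 \<and> algebraic_int u \<and> algebraic_int (inverse u)}"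

definition fundamental_unit :: "int \<Rightarrow> real \<Rightarrow> bool" where
  "fundamental_unit d \<epsilon> \<longleftrightarrow> \<epsilon> \<in> units_of (quad_field d) \<and> \<epsilon> > 1 \<and>
     units_of (quad_field d) = {s * \<epsilon> powi k | s k. s \<in> {1, -1}}"

definition real_embeddings :: "real set \<Rightarrow> (real \<Rightarrow> real) set" where
  "real_embeddings F = {\<sigma>. (\<forall>x\<in>F. \<forall>y\<in>F. \<sigma> (x + y) = \<sigma> x + \<sigma> y \<and> \<sigma> (x * y) = \<sigma> x * \<sigma> y)
       \<and> \<sigma> 1 = 1 \<and> (\<forall>x. x \<notin> F \<longrightarrow> \<sigma> x = 0)}"

definition signature :: "real set \<Rightarrow> real \<Rightarrow> ((real \<Rightarrow> real) \<Rightarrow> bit)" where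
  "signature F \<alpha> = (\<lambda>\<sigma>. if \<sigma> \<in> real_embeddings F \<and> \<sigma> \<alpha> < 0 then 1 else 0)"

definition f2_scale :: "bit \<Rightarrow> ('a \<Rightarrow> bit) \<Rightarrow> ('a \<Rightarrow> bit)" where
  "f2_scale c v = (\<lambda>x. c * v x)"

lemma f2_vector_space: "vector_space (f2_scale :: bit \<Rightarrow> ('a \<Rightarrow> bit) \<Rightarrow> _)"
  by unfold_locales (simp_all only: f2_scale_def fun_eq_iff plus_fun_def distrib_left distrib_right
      mult.assoc mult_1_left refl simp_thms allI)

definition unit_signature_rank :: "real set \<Rightarrow> nat" where
  "unit_signature_rank F = vector_space.dim f2_scale (signature F ` units_of F)"

definition gen4 :: "real \<Rightarrow> real \<Rightarrow> real \<Rightarrow> real \<Rightarrow> real set" where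
  "gen4 a b c d = {a powi i * b powi j * c powi k * d powi l | i j k l. True}"

end

theory Submission
  imports Defs "Jordan_Normal_Form.Char_Poly"
begin

hide_const (open) Group.units_of

definition ZS :: "real set \<Rightarrow> real set" where
  "ZS G = {s. \<exists>c::real\<Rightarrow>int. s = (\<Sum>g\<in>G. of_int (c g) * g)}"

lemma ZS_base: assumes "finite G" "g \<in> G" shows "g \<in> ZS G"
proof -
  have "(\<Sum>h\<in>G. of_int (if h = g then 1 else 0) * h) = (\<Sum>h\<in>G. if h = g then h else 0)"
    by (rule sum.cong) auto
  also have "\<dots> = g" using assms by simp
  finally have "(\<Sum>h\<in>G. of_int (if h = g then 1 else 0) * h) = g" .
  thus ?thesis unfolding ZS_def mem_Collect_eq by (intro exI[of _ "\<lambda>h. if h = g then 1 else 0"]) simp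
qed

lemma ZS_0: "0 \<in> ZS G"
  unfolding ZS_def by (rule CollectI, rule exI[of _ "\<lambda>_. 0"]) simp

lemma ZS_add: assumes "s \<in> ZS G" "t \<in> ZS G" shows "s + t \<in> ZS G"
proof -
  obtain c d where "s = (\<Sum>g\<in>G. of_int (c g) * g)" "t = (\<Sum>g\<in>G. of_int (d g) * g)"
    using assms unfolding ZS_def by auto
  hence "s + t = (\<Sum>g\<in>G. of_int (c g + d g) * g)"
    by (simp add: sum.distrib distrib_right)
  thus ?thesis unfolding ZS_def mem_Collect_eq by (intro exI[of _ "\<lambda>g. c g + d g"])
qed

lemma ZS_scale: assumes "s \<in> ZS G" shows "of_int k * s \<in> ZS G"
proof -
  obtain c where "s = (\<Sum>g\<in>G. of_int (c g) * g)"
    using assms unfolding ZS_def by auto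
  hence "of_int k * s = (\<Sum>g\<in>G. of_int (k * c g) * g)"
    by (simp add: sum_distrib_left mult.assoc)
  thus ?thesis unfolding ZS_def mem_Collect_eq by (intro exI[of _ "\<lambda>g. k * c g"])
qed

lemma ZS_sum: assumes "finite I" "\<And>i. i \<in> I \<Longrightarrow> f i \<in> ZS G"
  shows "(\<Sum>i\<in>I. f i) \<in> ZS G"
  using assms by (induction I rule: finite_induct) (auto intro: ZS_0 ZS_add)

lemma ZS_mult: assumes "finite A" "s \<in> ZS A" "\<And>a. a \<in> A \<Longrightarrow> a * t \<in> ZS G"
  shows "s * t \<in> ZS G"
proof -
  obtain c where "s = (\<Sum>a\<in>A. of_int (c a) * a)"
    using assms unfolding ZS_def by auto
  hence "s * t = (\<Sum>a\<in>A. of_int (c a) * (a * t))"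
    by (simp add: sum_distrib_right mult.assoc)
  also have "\<dots> \<in> ZS G" using assms by (intro ZS_sum ZS_scale) auto
  finally show ?thesis .
qed

lemma ZS_criterion:
  assumes fin: "finite G" and nz: "g0 \<in> G" "g0 \<noteq> 0" and cl: "\<And>g. g \<in> G \<Longrightarrow> z * g \<in> ZS G"
  shows "Polynomial.algebraic_int z"
proof -
  obtain gs where gs: "distinct gs" "set gs = G" using finite_distinct_list[OF fin] by auto
  define N where "N = length gs"
  have sumG: "(\<Sum>g\<in>G. f g) = (\<Sum>l\<in>{0..<N}. f (gs ! l))" for f :: "real \<Rightarrow> real"
  proof -
    have "(\<Sum>g\<in>G. f g) = sum_list (map f gs)" using gs by (simp add: sum_list_distinct_conv_sum_set)
    also have "\<dots> = (\<Sum>l\<in>{0..<N}. f (gs ! l))" unfolding N_def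
      by (simp add: sum_list_sum_nth)
    finally show ?thesis .
  qed
  have "\<forall>k\<in>{0..<N}. \<exists>c::real\<Rightarrow>int. z * gs ! k = (\<Sum>g\<in>G. of_int (c g) * g)"
    using cl gs unfolding ZS_def N_def by auto
  then obtain C where C: "\<And>k. k < N \<Longrightarrow> z * gs ! k = (\<Sum>g\<in>G. of_int (C k g) * g)"
    by (metis atLeastLessThan_iff zero_le bchoice)
  define A :: "int mat" where "A = mat N N (\<lambda>(k,l). C k (gs ! l))"
  define A' :: "real mat" where "A' = map_mat of_int A"
  define v :: "real Matrix.vec" where "v = Matrix.vec N (\<lambda>k. gs ! k)"
  have A: "A \<in> carrier_mat N N" unfolding A_def by simp
  have A': "A' \<in> carrier_mat N N" unfolding A'_def A_def by simp
  have "eigenvector A' v z" unfolding eigenvector_def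
  proof (intro conjI)
    show "v \<in> carrier_vec (dim_row A')" using A' unfolding v_def by simp
    obtain k where k: "k < N" "gs ! k = g0" using nz gs unfolding N_def by (metis in_set_conv_nth)
    show "v \<noteq> 0\<^sub>v (dim_row A')"
    proof
      assume "v = 0\<^sub>v (dim_row A')"
      hence "v $ k = 0" using A' k by simp
      thus False using k nz unfolding v_def by simp
    qed
    show "A' *\<^sub>v v = z \<cdot>\<^sub>v v"
    proof (rule eq_vecI)
      fix k assume "k < dim_vec (z \<cdot>\<^sub>v v)"
      hence k: "k < N" unfolding v_def by simp
      have "(A' *\<^sub>v v) $ k = (\<Sum>l\<in>{0..<N}. of_int (C k (gs ! l)) * gs ! l)"
        using k unfolding A'_def A_def v_def by (simp add: scalar_prod_def)
      also have "\<dots> = z * gs ! k" using C[OF k] sumG by simp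
      finally show "(A' *\<^sub>v v) $ k = (z \<cdot>\<^sub>v v) $ k" using k unfolding v_def by simp
    qed (use A' in \<open>simp add: v_def\<close>)
  qed
  hence "eigenvalue A' z" unfolding eigenvalue_def by blast
  hence "poly (char_poly A') z = 0" using eigenvalue_root_char_poly[OF A'] by simp
  moreover have "char_poly A' = of_int_poly (char_poly A)"
    unfolding A'_def using of_int_hom.char_poly_hom[OF A] by simp
  moreover have "lead_coeff (char_poly A) = 1" using degree_monic_char_poly[OF A] by simp
  ultimately show ?thesis unfolding algebraic_int_altdef_ipoly by auto
qed

lemma alg_int_pow_ZS:
  fixes p :: "int poly" and x :: real
  assumes p: "lead_coeff p = 1" "poly (of_int_poly p) x = 0"
  shows "x ^ i \<in> ZS ((\<lambda>j. x ^ j) ` {..<degree p})"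
proof (induction i rule: less_induct)
  case (less i)
  define d where "d = degree p"
  let ?X = "(\<lambda>j. x ^ j) ` {..<degree p}"
  show ?case
  proof (cases "i < d")
    case True thus ?thesis unfolding d_def by (intro ZS_base) auto
  next
    case False
    have "0 = poly (of_int_poly p) x" using p by simp
    also have "\<dots> = (\<Sum>j\<le>d. of_int (coeff p j) * x ^ j)"
      unfolding poly_altdef d_def by (simp add: degree_map_poly coeff_map_poly)
    also have "\<dots> = (\<Sum>j<d. of_int (coeff p j) * x ^ j) + x ^ d"
      using p(1) unfolding d_def by (simp add: lessThan_Suc_atMost[symmetric])
    finally have xd: "x ^ d = - (\<Sum>j<d. of_int (coeff p j) * x ^ j)" by linarith
    have "x ^ i = x ^ (i - d) * x ^ d" using False by (simp add: power_add[symmetric])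
    also have "\<dots> = (\<Sum>j<d. of_int (- coeff p j) * x ^ (i - d + j))"
      unfolding xd by (simp add: sum_distrib_left power_add sum_negf algebra_simps)
    also have "\<dots> \<in> ZS ?X"
    proof (intro ZS_sum ZS_scale)
      fix j assume "j \<in> {..<d}"
      hence "i - d + j < i" using False by auto
      thus "x ^ (i - d + j) \<in> ZS ?X" by (rule less.IH)
    qed simp
    finally show ?thesis .
  qed
qed

lemma alg_int_mult:
  fixes x y :: real
  assumes "Polynomial.algebraic_int x" "Polynomial.algebraic_int y"
  shows "Polynomial.algebraic_int (x * y)"
proof -
  obtain p where p: "poly (of_int_poly p) x = 0" "lead_coeff p = 1"
    using assms(1) unfolding algebraic_int_altdef_ipoly by auto
  obtain q where q: "poly (of_int_poly q) y = 0" "lead_coeff q = 1"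
    using assms(2) unfolding algebraic_int_altdef_ipoly by auto
  define d where "d = degree p"
  define e where "e = degree q"
  have d: "d > 0"
  proof (rule ccontr)
    assume "\<not> d > 0"
    hence "degree p = 0" unfolding d_def by simp
    then obtain a where "p = [:a:]" by (rule degree_eq_zeroE)
    with p(2) have "p = [:1:]" by simp
    thus False using p(1) by simp
  qed
  have e: "e > 0"
  proof (rule ccontr)
    assume "\<not> e > 0"
    hence "degree q = 0" unfolding e_def by simp
    then obtain a where "q = [:a:]" by (rule degree_eq_zeroE)
    with q(2) have "q = [:1:]" by simp
    thus False using q(1) by simp
  qed
  define X where "X = (\<lambda>j. x ^ j) ` {..<d}"
  define Y where "Y = (\<lambda>j. y ^ j) ` {..<e}"
  define G where "G = (\<lambda>(i,j). x ^ i * y ^ j) ` ({..<d} \<times> {..<e})"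
  have finG: "finite G" unfolding G_def by simp
  have xi: "x ^ i \<in> ZS X" for i unfolding X_def d_def using alg_int_pow_ZS[OF p(2,1)] .
  have yj: "y ^ j \<in> ZS Y" for j unfolding Y_def e_def using alg_int_pow_ZS[OF q(2,1)] .
  have xy: "x ^ i * y ^ j \<in> ZS G" for i j
  proof (rule ZS_mult[OF _ xi])
    show "finite X" unfolding X_def by simp
    fix a assume "a \<in> X"
    then obtain i' where i': "i' < d" "a = x ^ i'" unfolding X_def by auto
    have "y ^ j * a \<in> ZS G"
    proof (rule ZS_mult[OF _ yj])
      show "finite Y" unfolding Y_def by simp
      fix b assume "b \<in> Y"
      then obtain j' where j': "j' < e" "b = y ^ j'" unfolding Y_def by auto
      have "b * a = x ^ i' * y ^ j'" using i' j' by (simp add: mult.commute)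
      moreover have "x ^ i' * y ^ j' \<in> G" unfolding G_def
        by (rule image_eqI[where x="(i',j')"]) (use i' j' in auto)
      ultimately have "b * a \<in> G" by simp
      thus "b * a \<in> ZS G" by (rule ZS_base[OF finG])
    qed
    thus "a * y ^ j \<in> ZS G" by (simp add: mult.commute)
  qed
  have cl: "x * y * g \<in> ZS G" if gG: "g \<in> G" for g
  proof -
    obtain i j where "g = x ^ i * y ^ j" using gG unfolding G_def by auto
    hence e: "x * y * g = x ^ Suc i * y ^ Suc j" by simp
    show ?thesis unfolding e by (rule xy)
  qed
  have g1: "x ^ 0 * y ^ 0 \<in> G" unfolding G_def
    by (rule image_eqI[where x="(0,0)"]) (use d e in auto)
  show ?thesis
    by (rule ZS_criterion[OF finG _ _ cl, of 1]) (use g1 in auto)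
qed


lemma sq_rat:
  fixes r :: real
  assumes "r \<in> \<rat>" "r ^ 2 = of_int k"
  shows "is_int_square k"
proof -
  have "poly (of_int_poly [:-k, 0, 1:]) r = 0" using assms(2) by (simp add: power2_eq_square)
  moreover have "lead_coeff [:-k, 0, 1:] = 1" by simp
  ultimately have "Polynomial.algebraic_int r" unfolding algebraic_int_altdef_ipoly by blast
  hence "r \<in> \<int>" using rational_algebraic_int_is_int assms(1) by blast
  then obtain j where "r = of_int j" by (auto elim: Ints_cases)
  hence "of_int k = (of_int (j ^ 2) :: real)" using assms(2) by simp
  hence "k = j ^ 2" by linarith
  thus ?thesis unfolding is_int_square_def by blast
qed

lemma irr_sqrt:
  fixes a b :: real
  assumes "k \<ge> 0" "\<not> is_int_square k" "a \<in> \<rat>" "b \<in> \<rat>" "a + b * sqrt (of_int k) = 0"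
  shows "a = 0 \<and> b = 0"
proof (cases "b = 0")
  case True thus ?thesis using assms by simp
next
  case False
  hence "sqrt (of_int k) = - a / b" using assms(5) by (simp add: field_simps add_eq_0_iff)
  hence "sqrt (of_int k) \<in> \<rat>" using assms(3,4) by simp
  moreover have "sqrt (of_int k) ^ 2 = of_int k" using assms(1) by simp
  ultimately have "is_int_square k" by (rule sq_rat)
  thus ?thesis using assms(2) by simp
qed

locale biq =
  fixes m n :: int
  assumes rb: "real_biquadratic m n"
begin

lemma m_pos: "m > 0" and n_pos: "n > 0" and m_ns: "\<not> is_int_square m"
  and n_ns: "\<not> is_int_square n" and mn_ns: "\<not> is_int_square (m * n)"
  using rb unfolding real_biquadratic_def by auto

definition rm :: real where "rm = sqrt (of_int m)"
definition rn :: real where "rn = sqrt (of_int n)"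

lemma rm_pos: "rm > 0" and rn_pos: "rn > 0" using m_pos n_pos unfolding rm_def rn_def by auto
lemma rm_sq: "rm * rm = of_int m" and rn_sq: "rn * rn = of_int n"
  using m_pos n_pos unfolding rm_def rn_def by auto
lemma rmn: "sqrt (of_int (m * n)) = rm * rn"
  unfolding rm_def rn_def by (simp add: real_sqrt_mult)

lemma rm_irr: "a \<in> \<rat> \<Longrightarrow> b \<in> \<rat> \<Longrightarrow> a + b * rm = 0 \<Longrightarrow> a = 0 \<and> b = 0"
  using irr_sqrt[of m a b] m_pos m_ns unfolding rm_def by auto
lemma rn_irr: "a \<in> \<rat> \<Longrightarrow> b \<in> \<rat> \<Longrightarrow> a + b * rn = 0 \<Longrightarrow> a = 0 \<and> b = 0"
  using irr_sqrt[of n a b] n_pos n_ns unfolding rn_def by auto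
lemma rmn_irr: "a \<in> \<rat> \<Longrightarrow> b \<in> \<rat> \<Longrightarrow> a + b * (rm * rn) = 0 \<Longrightarrow> a = 0 \<and> b = 0"
  using irr_sqrt[of "m * n" a b] m_pos n_pos mn_ns rmn by auto

lemma lin_indep:
  assumes q: "a \<in> \<rat>" "b \<in> \<rat>" "c \<in> \<rat>" "d \<in> \<rat>"
    and eq: "a + b * rm + c * rn + d * (rm * rn) = 0"
  shows "a = 0 \<and> b = 0 \<and> c = 0 \<and> d = 0"
proof (cases "c + d * rm = 0")
  case True
  hence "c = 0 \<and> d = 0" using rm_irr q by blast
  moreover from this have "a + b * rm = 0" using eq by simp
  ultimately show ?thesis using rm_irr q by blast
next
  case False
  define N where "N = c * c - d * d * of_int m"
  have Nq: "N \<in> \<rat>" unfolding N_def using q by simp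
  have N0: "N \<noteq> 0"
  proof
    assume N: "N = 0"
    have "(c + d * rm) * (c - d * rm) = N" unfolding N_def using rm_sq by (simp add: algebra_simps)
    hence "c - d * rm = 0" using N False by simp
    hence "c = 0 \<and> - d = 0" using rm_irr[of c "-d"] q by simp
    thus False using False by simp
  qed
  define P where "P = - (a * c - b * d * of_int m) / N"
  define Q where "Q = - (b * c - a * d) / N"
  have Pq: "P \<in> \<rat>" and Qq: "Q \<in> \<rat>" unfolding P_def Q_def using q Nq by simp_all
  have "(a + b * rm) + (c + d * rm) * rn = 0" using eq by (simp add: algebra_simps)
  hence "(c - d * rm) * ((a + b * rm) + (c + d * rm) * rn) = 0" by simp
  moreover have "(c - d * rm) * ((a + b * rm) + (c + d * rm) * rn) =
     (c + d * rm) * (c - d * rm) * rn - (- (a + b * rm) * (c - d * rm))" by (simp add: algebra_simps)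
  ultimately have "(c + d * rm) * (c - d * rm) * rn = - (a + b * rm) * (c - d * rm)" by simp
  moreover have "(c + d * rm) * (c - d * rm) = N" unfolding N_def using rm_sq by (simp add: algebra_simps)
  moreover have "- (a + b * rm) * (c - d * rm) = - (a * c - b * d * of_int m) - (b * c - a * d) * rm"
    using rm_sq by (simp add: algebra_simps)
  ultimately have "N * rn = - (a * c - b * d * of_int m) - (b * c - a * d) * rm" by simp
  hence "rn = (- (a * c - b * d * of_int m) - (b * c - a * d) * rm) / N" using N0
    by (metis nonzero_mult_div_cancel_left)
  also have "\<dots> = P + Q * rm" unfolding P_def Q_def using N0 by (simp add: field_simps)
  finally have rnPQ: "rn = P + Q * rm" .
  hence "of_int n = (P + Q * rm) * (P + Q * rm)" using rn_sq by simp
  also have "\<dots> = (P * P + Q * Q * (rm * rm)) + (2 * P * Q) * rm" by (simp add: algebra_simps)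
  also have "\<dots> = (P * P + Q * Q * of_int m) + (2 * P * Q) * rm" using rm_sq by simp
  finally have "(P * P + Q * Q * of_int m - of_int n) + (2 * P * Q) * rm = 0" by simp
  moreover have "P * P + Q * Q * of_int m - of_int n \<in> \<rat>" "2 * P * Q \<in> \<rat>" using Pq Qq by simp_all
  ultimately have "P * P + Q * Q * of_int m - of_int n = 0 \<and> 2 * P * Q = 0"
    using rm_irr by blast
  hence h: "P * P + Q * Q * of_int m = of_int n" "P = 0 \<or> Q = 0" by auto
  show ?thesis
  proof (cases "Q = 0")
    case True
    hence "P ^ 2 = of_int n" using h by (simp add: power2_eq_square)
    hence "is_int_square n" using sq_rat Pq by blast
    thus ?thesis using n_ns by simp
  next
    case False
    hence "P = 0" using h by simp
    hence "(Q * of_int m) ^ 2 = of_int (m * n)" using h by (simp add: power2_eq_square algebra_simps)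
    moreover have "Q * of_int m \<in> \<rat>" using Qq by simp
    ultimately have "is_int_square (m * n)" using sq_rat by blast
    thus ?thesis using mn_ns by simp
  qed
qed

definition bq :: "rat \<Rightarrow> rat \<Rightarrow> rat \<Rightarrow> rat \<Rightarrow> real" where
  "bq a b c d = of_rat a + of_rat b * rm + of_rat c * rn + of_rat d * (rm * rn)"

lemma K_eq: "biquad_field m n = {bq a b c d | a b c d. True}"
  unfolding biquad_field_def bq_def rmn rm_def[symmetric] rn_def[symmetric] ..

lemma bq_inj: "bq a b c d = bq a' b' c' d' \<Longrightarrow> a = a' \<and> b = b' \<and> c = c' \<and> d = d'"
proof -
  assume "bq a b c d = bq a' b' c' d'"
  hence "(of_rat a - of_rat a') + (of_rat b - of_rat b') * rm + (of_rat c - of_rat c') * rn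
     + (of_rat d - of_rat d') * (rm * rn) = 0" unfolding bq_def by (simp add: algebra_simps)
  hence "of_rat a - of_rat a' = (0::real) \<and> of_rat b - of_rat b' = (0::real) \<and>
     of_rat c - of_rat c' = (0::real) \<and> of_rat d - of_rat d' = (0::real)"
    by (intro lin_indep) auto
  thus ?thesis by simp
qed

lemma bq_add: "bq a b c d + bq a' b' c' d' = bq (a + a') (b + b') (c + c') (d + d')"
  unfolding bq_def by (simp add: of_rat_add algebra_simps)

lemma bq_uminus: "- bq a b c d = bq (-a) (-b) (-c) (-d)"
  unfolding bq_def by (simp add: of_rat_minus algebra_simps)

lemma bq_mult: "bq a b c d * bq a' b' c' d' =
  bq (a * a' + of_int m * b * b' + of_int n * c * c' + of_int m * of_int n * d * d')
     (a * b' + b * a' + of_int n * (c * d' + d * c'))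
     (a * c' + c * a' + of_int m * (b * d' + d * b'))
     (a * d' + d * a' + b * c' + c * b')"
proof -
  let ?M = "real_of_int m" and ?N = "real_of_int n"
  let ?a = "real_of_rat a" and ?b = "real_of_rat b" and ?c = "real_of_rat c" and ?d = "real_of_rat d"
  let ?a' = "real_of_rat a'" and ?b' = "real_of_rat b'" and ?c' = "real_of_rat c'" and ?d' = "real_of_rat d'"
  have "(?a + ?b * rm + ?c * rn + ?d * (rm * rn)) * (?a' + ?b' * rm + ?c' * rn + ?d' * (rm * rn))
    - ((?a * ?a' + ?M * ?b * ?b' + ?N * ?c * ?c' + ?M * ?N * ?d * ?d')
     + (?a * ?b' + ?b * ?a' + ?N * (?c * ?d' + ?d * ?c')) * rm
     + (?a * ?c' + ?c * ?a' + ?M * (?b * ?d' + ?d * ?b')) * rn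
     + (?a * ?d' + ?d * ?a' + ?b * ?c' + ?c * ?b') * (rm * rn))
    = (rm * rm - ?M) * (?b * ?b' + (?b * ?d' + ?d * ?b') * rn + ?d * ?d' * (rn * rn))
      + (rn * rn - ?N) * (?c * ?c' + (?c * ?d' + ?d * ?c') * rm + ?d * ?d' * ?M)"
    by (simp add: algebra_simps)
  also have "\<dots> = 0" using rm_sq rn_sq by simp
  finally show ?thesis unfolding bq_def of_rat_add of_rat_mult of_rat_of_int_eq
    by (simp add: algebra_simps)
qed

lemma bq_of_rat: "of_rat r = bq r 0 0 0" unfolding bq_def by simp

lemma K_bq: "bq a b c d \<in> biquad_field m n" unfolding K_eq by blast

lemma K_cases: assumes "x \<in> biquad_field m n" obtains a b c d where "x = bq a b c d"
  using assms unfolding K_eq by blast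

lemma K_add: "x \<in> biquad_field m n \<Longrightarrow> y \<in> biquad_field m n \<Longrightarrow> x + y \<in> biquad_field m n"
  by (auto elim!: K_cases simp: bq_add K_bq)
lemma K_mult: "x \<in> biquad_field m n \<Longrightarrow> y \<in> biquad_field m n \<Longrightarrow> x * y \<in> biquad_field m n"
  by (auto elim!: K_cases simp: bq_mult K_bq)
lemma K_uminus: "x \<in> biquad_field m n \<Longrightarrow> - x \<in> biquad_field m n"
  by (auto elim!: K_cases simp: bq_uminus K_bq)
lemma K_of_rat: "of_rat r \<in> biquad_field m n" by (simp add: bq_of_rat K_bq)
lemma K_1: "1 \<in> biquad_field m n" using K_of_rat[of 1] by simp
lemma K_0: "0 \<in> biquad_field m n" using K_of_rat[of 0] by simp
lemma K_of_int: "of_int k \<in> biquad_field m n" using K_of_rat[of "of_int k"] by simp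
lemma K_power: "x \<in> biquad_field m n \<Longrightarrow> x ^ k \<in> biquad_field m n"
  by (induction k) (auto intro: K_mult K_1)

lemma qf_m: "of_rat a + of_rat b * sqrt (of_int m) = bq a b 0 0"
  unfolding bq_def rm_def by simp
lemma qf_n: "of_rat a + of_rat b * sqrt (of_int n) = bq a 0 b 0"
  unfolding bq_def rn_def by simp
lemma qf_mn: "of_rat a + of_rat b * sqrt (of_int (m * n)) = bq a 0 0 b"
  unfolding bq_def rmn by simp

lemma qf_m_sub: "quad_field m \<subseteq> biquad_field m n"
  unfolding quad_field_def qf_m using K_bq by auto
lemma qf_n_sub: "quad_field n \<subseteq> biquad_field m n"
  unfolding quad_field_def qf_n using K_bq by auto
lemma qf_mn_sub: "quad_field (m * n) \<subseteq> biquad_field m n"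
  unfolding quad_field_def qf_mn using K_bq by auto

end


lemma quad_conj_eq:
  assumes "k \<ge> 0" "\<not> is_int_square k"
  shows "quad_conj k (of_rat a + of_rat b * sqrt (of_int k)) = of_rat a - of_rat b * sqrt (of_int k)"
  unfolding quad_conj_def
proof (rule the_equality)
  show "\<exists>a' b'. of_rat a + of_rat b * sqrt (of_int k) = of_rat a' + of_rat b' * sqrt (of_int k) \<and>
      of_rat a - of_rat b * sqrt (of_int k) = of_rat a' - of_rat b' * sqrt (of_int k)" by blast
next
  fix y assume "\<exists>a' b'. of_rat a + of_rat b * sqrt (of_int k) = of_rat a' + of_rat b' * sqrt (of_int k) \<and>
      y = of_rat a' - of_rat b' * sqrt (of_int k)"
  then obtain a' b' where e: "of_rat a + of_rat b * sqrt (of_int k) = of_rat a' + of_rat b' * sqrt (of_int k)"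
    and y: "y = of_rat a' - of_rat b' * sqrt (of_int k)" by blast
  from e have "(of_rat a - of_rat a') + (of_rat b - of_rat b') * sqrt (of_int k) = (0::real)"
    by (simp add: algebra_simps)
  hence "of_rat a - of_rat a' = (0::real) \<and> of_rat b - of_rat b' = (0::real)"
    by (intro irr_sqrt[OF assms]) auto
  thus "y = of_rat a - of_rat b * sqrt (of_int k)" using y by simp
qed

lemma quad_conj_in:
  assumes "x \<in> quad_field k" "k \<ge> 0" "\<not> is_int_square k"
  shows "quad_conj k x \<in> quad_field k"
proof -
  obtain a b where x: "x = of_rat a + of_rat b * sqrt (of_int k)" using assms(1) unfolding quad_field_def by blast
  have "quad_conj k x = of_rat a + of_rat (-b) * sqrt (of_int k)"
    unfolding x using quad_conj_eq[OF assms(2,3)] by (simp add: of_rat_minus)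
  thus ?thesis unfolding quad_field_def by blast
qed

context biq
begin

definition sg :: "bool \<Rightarrow> rat \<Rightarrow> rat" where "sg p b = (if p then - b else b)"

definition emb :: "bool \<Rightarrow> bool \<Rightarrow> real \<Rightarrow> real" where
  "emb p q x = (if x \<in> biquad_field m n then
     (THE y. \<exists>a b c d. x = bq a b c d \<and> y = bq a (sg p b) (sg q c) (sg (p \<noteq> q) d)) else 0)"

lemma emb_bq: "emb p q (bq a b c d) = bq a (sg p b) (sg q c) (sg (p \<noteq> q) d)"
proof -
  have "(THE y. \<exists>a' b' c' d'. bq a b c d = bq a' b' c' d' \<and> y = bq a' (sg p b') (sg q c') (sg (p \<noteq> q) d'))
     = bq a (sg p b) (sg q c) (sg (p \<noteq> q) d)"
  proof (rule the_equality)
    show "\<exists>a' b' c' d'. bq a b c d = bq a' b' c' d' \<and>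
       bq a (sg p b) (sg q c) (sg (p \<noteq> q) d) = bq a' (sg p b') (sg q c') (sg (p \<noteq> q) d')" by blast
  next
    fix y assume "\<exists>a' b' c' d'. bq a b c d = bq a' b' c' d' \<and> y = bq a' (sg p b') (sg q c') (sg (p \<noteq> q) d')"
    then obtain a' b' c' d' where "bq a b c d = bq a' b' c' d'" "y = bq a' (sg p b') (sg q c') (sg (p \<noteq> q) d')"
      by blast
    thus "y = bq a (sg p b) (sg q c) (sg (p \<noteq> q) d)" using bq_inj by blast
  qed
  thus ?thesis unfolding emb_def using K_bq by simp
qed

lemma emb_out: "x \<notin> biquad_field m n \<Longrightarrow> emb p q x = 0" unfolding emb_def by simp

lemma emb_in: "x \<in> biquad_field m n \<Longrightarrow> emb p q x \<in> biquad_field m n"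
  by (auto elim!: K_cases simp: emb_bq K_bq)

lemma emb_add: "x \<in> biquad_field m n \<Longrightarrow> y \<in> biquad_field m n \<Longrightarrow> emb p q (x + y) = emb p q x + emb p q y"
  by (auto elim!: K_cases simp: emb_bq bq_add sg_def)

lemma bq_cong: "a = a' \<Longrightarrow> b = b' \<Longrightarrow> c = c' \<Longrightarrow> d = d' \<Longrightarrow> bq a b c d = bq a' b' c' d'"
  by simp

lemma emb_mult: "x \<in> biquad_field m n \<Longrightarrow> y \<in> biquad_field m n \<Longrightarrow> emb p q (x * y) = emb p q x * emb p q y"
  by (auto elim!: K_cases simp: emb_bq bq_mult sg_def intro!: bq_cong; simp add: algebra_simps)

lemma emb_of_rat: "emb p q (of_rat r) = of_rat r"
  by (simp add: bq_of_rat emb_bq sg_def)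

lemma emb_1: "emb p q 1 = 1" using emb_of_rat[of p q 1] by simp
lemma emb_0: "emb p q 0 = 0" using emb_of_rat[of p q 0] by simp

lemma emb_uminus: "x \<in> biquad_field m n \<Longrightarrow> emb p q (- x) = - emb p q x"
  by (auto elim!: K_cases simp: emb_bq bq_uminus sg_def)

lemma emb_emb: "x \<in> biquad_field m n \<Longrightarrow> emb p q (emb p' q' x) = emb (p \<noteq> p') (q \<noteq> q') x"
  by (auto elim!: K_cases simp: emb_bq sg_def)

lemma emb_FF: "x \<in> biquad_field m n \<Longrightarrow> emb False False x = x"
  by (auto elim!: K_cases simp: emb_bq sg_def)

lemma emb_nz: assumes "x \<in> biquad_field m n" "x \<noteq> 0" shows "emb p q x \<noteq> 0"
proof
  assume "emb p q x = 0"
  hence "emb p q (emb p q x) = 0" by (simp add: emb_0)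
  thus False using emb_emb[OF assms(1)] emb_FF[OF assms(1)] assms(2) by simp
qed

lemma emb_power: "x \<in> biquad_field m n \<Longrightarrow> emb p q (x ^ k) = emb p q x ^ k"
  by (induction k) (auto simp: emb_1 emb_mult K_power)

lemma emb_embedding: "emb p q \<in> real_embeddings (biquad_field m n)"
  unfolding real_embeddings_def using emb_add emb_mult emb_1 emb_out by blast

lemma rm_bq: "rm = bq 0 1 0 0" and rn_bq: "rn = bq 0 0 1 0" unfolding bq_def by simp_all

lemma emb_rm: "emb p q rm = (if p then - rm else rm)"
  unfolding rm_bq emb_bq by (simp add: bq_def sg_def)
lemma emb_rn: "emb p q rn = (if q then - rn else rn)"
  unfolding rn_bq emb_bq by (simp add: bq_def sg_def)

lemma emb_inj: assumes "emb p q = emb p' q'" shows "p = p'" "q = q'"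
proof -
  have "emb p q rm = emb p' q' rm" "emb p q rn = emb p' q' rn" using assms by simp_all
  thus "p = p'" "q = q'" unfolding emb_rm emb_rn using rm_pos rn_pos
    by (auto split: if_splits)
qed

lemma embedding_is_emb:
  assumes s: "\<sigma> \<in> real_embeddings (biquad_field m n)"
  shows "\<exists>p q. \<sigma> = emb p q"
proof -
  let ?K = "biquad_field m n"
  have add: "\<sigma> (x + y) = \<sigma> x + \<sigma> y" and mult: "\<sigma> (x * y) = \<sigma> x * \<sigma> y"
    if "x \<in> ?K" "y \<in> ?K" for x y using s that unfolding real_embeddings_def by auto
  have one: "\<sigma> 1 = 1" and out: "\<And>x. x \<notin> ?K \<Longrightarrow> \<sigma> x = 0" using s unfolding real_embeddings_def by auto
  have zero: "\<sigma> 0 = 0" using add[OF K_0 K_0] by simp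
  have neg: "\<sigma> (- x) = - \<sigma> x" if "x \<in> ?K" for x
    using add[OF that K_uminus[OF that]] zero by simp
  have nat: "\<sigma> (of_nat k) = of_nat k" for k
  proof (induction k)
    case 0 thus ?case using zero by simp
  next
    case (Suc k)
    have "\<sigma> (of_nat (Suc k)) = \<sigma> (of_nat k + 1)" by (simp add: add.commute)
    also have "\<dots> = \<sigma> (of_nat k) + \<sigma> 1" using add[OF _ K_1, of "of_nat k"] K_of_int[of "int k"] by simp
    finally show ?case using Suc one by simp
  qed
  have int: "\<sigma> (of_int k) = of_int k" for k
  proof (cases "k \<ge> 0")
    case True thus ?thesis using nat[of "nat k"] by simp
  next
    case False
    hence "of_int k = - (of_nat (nat (- k)) :: real)" by simp
    thus ?thesis using neg[of "of_nat (nat (- k))"] nat[of "nat (-k)"] K_of_int[of "int (nat (-k))"] False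
      by simp
  qed
  have rat: "\<sigma> (of_rat r) = of_rat r" for r
  proof -
    obtain a b where ab: "quotient_of r = (a, b)" by (cases "quotient_of r")
    have b: "b > 0" using quotient_of_denom_pos[OF ab] .
    have r: "r = of_int a / of_int b" using quotient_of_div[OF ab] .
    have "of_rat r * of_int b = (of_int a :: real)" using b unfolding r by (simp add: of_rat_divide)
    hence "\<sigma> (of_rat r) * of_int b = of_int a"
      using mult[OF K_of_rat K_of_int, of r b] int[of a] int[of b] by simp
    hence "\<sigma> (of_rat r) = of_int a / of_int b" using b by (simp add: field_simps)
    thus ?thesis unfolding r using b by (simp add: of_rat_divide)
  qed
  have rmK: "rm \<in> ?K" and rnK: "rn \<in> ?K" using K_bq rm_bq rn_bq by simp_all
  have "\<sigma> rm * \<sigma> rm = of_int m" using mult[OF rmK rmK] rm_sq int by simp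
  hence "(\<sigma> rm - rm) * (\<sigma> rm + rm) = 0" using rm_sq by (simp add: algebra_simps)
  hence srm: "\<sigma> rm = (if \<sigma> rm \<noteq> rm then - rm else rm)" by (auto simp: add_eq_0_iff)
  have "\<sigma> rn * \<sigma> rn = of_int n" using mult[OF rnK rnK] rn_sq int by simp
  hence "(\<sigma> rn - rn) * (\<sigma> rn + rn) = 0" using rn_sq by (simp add: algebra_simps)
  hence srn: "\<sigma> rn = (if \<sigma> rn \<noteq> rn then - rn else rn)" by (auto simp: add_eq_0_iff)
  define p where "p = (\<sigma> rm \<noteq> rm)"
  define q where "q = (\<sigma> rn \<noteq> rn)"
  have "\<sigma> x = emb p q x" for x
  proof (cases "x \<in> ?K")
    case False thus ?thesis using out emb_out by simp
  next
    case True
    then obtain a b c d where x: "x = bq a b c d" by (rule K_cases)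
    have rmnK: "rm * rn \<in> ?K" using K_mult rmK rnK by blast
    have t1: "of_rat b * rm \<in> ?K" "of_rat c * rn \<in> ?K" "of_rat d * (rm * rn) \<in> ?K"
      using K_mult K_of_rat rmK rnK rmnK by blast+
    have "\<sigma> x = \<sigma> (of_rat a) + \<sigma> (of_rat b * rm) + \<sigma> (of_rat c * rn) + \<sigma> (of_rat d * (rm * rn))"
      unfolding x bq_def using t1 K_of_rat K_add add by (metis)
    also have "\<dots> = of_rat a + of_rat b * \<sigma> rm + of_rat c * \<sigma> rn + of_rat d * (\<sigma> rm * \<sigma> rn)"
      using mult K_of_rat rmK rnK rmnK rat by simp
    also have "\<dots> = emb p q x" unfolding x emb_bq unfolding bq_def p_def q_def
      using srm srn by (cases "\<sigma> rm \<noteq> rm"; cases "\<sigma> rn \<noteq> rn") (auto simp: sg_def of_rat_minus)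
    finally show ?thesis .
  qed
  thus ?thesis by blast
qed

lemma embeddings_eq: "real_embeddings (biquad_field m n) = {emb p q | p q. True}"
  using embedding_is_emb emb_embedding by blast

lemma emb_qf_m: "x \<in> quad_field m \<Longrightarrow> emb p q x = (if p then quad_conj m x else x)"
proof -
  assume "x \<in> quad_field m"
  then obtain a b where x: "x = of_rat a + of_rat b * sqrt (of_int m)" unfolding quad_field_def by blast
  have m0: "m \<ge> 0" using m_pos by simp
  have c: "quad_conj m x = of_rat a - of_rat b * sqrt (of_int m)"
    unfolding x by (rule quad_conj_eq[OF m0 m_ns])
  show ?thesis unfolding c unfolding x qf_m emb_bq
    by (simp add: sg_def bq_def rm_def of_rat_minus)
qed

lemma emb_qf_n: "x \<in> quad_field n \<Longrightarrow> emb p q x = (if q then quad_conj n x else x)"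
proof -
  assume "x \<in> quad_field n"
  then obtain a b where x: "x = of_rat a + of_rat b * sqrt (of_int n)" unfolding quad_field_def by blast
  have n0: "n \<ge> 0" using n_pos by simp
  have c: "quad_conj n x = of_rat a - of_rat b * sqrt (of_int n)"
    unfolding x by (rule quad_conj_eq[OF n0 n_ns])
  show ?thesis unfolding c unfolding x qf_n emb_bq
    by (simp add: sg_def bq_def rn_def of_rat_minus)
qed

lemma emb_qf_mn: "x \<in> quad_field (m * n) \<Longrightarrow> emb p q x = (if p \<noteq> q then quad_conj (m * n) x else x)"
proof -
  assume "x \<in> quad_field (m * n)"
  then obtain a b where x: "x = of_rat a + of_rat b * sqrt (of_int (m * n))" unfolding quad_field_def by blast
  have "m * n \<ge> 0" using m_pos n_pos by simp
  have c: "quad_conj (m * n) x = of_rat a - of_rat b * sqrt (of_int (m * n))"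
    unfolding x by (rule quad_conj_eq[OF \<open>m * n \<ge> 0\<close> mn_ns])
  show ?thesis unfolding c unfolding x qf_mn emb_bq
    using rmn by (simp add: sg_def bq_def of_rat_minus)
qed

end


lemma ai_iff: "algebraic_int x \<longleftrightarrow> Polynomial.algebraic_int x"
  unfolding algebraic_int_def algebraic_int_altdef_ipoly by blast

lemma ai_mult: "algebraic_int x \<Longrightarrow> algebraic_int y \<Longrightarrow> algebraic_int (x * y)"
  using alg_int_mult ai_iff by blast

lemma ai_minus1: "algebraic_int (-1)"
  unfolding ai_iff by simp

lemma ai_sqrt: "algebraic_int x \<Longrightarrow> algebraic_int (sqrt x)"
  unfolding ai_iff by blast

context biq
begin

lemma ai_emb:
  assumes x: "x \<in> biquad_field m n" and ai: "algebraic_int x"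
  shows "algebraic_int (emb p q x)"
proof -
  have gen: "poly (map_poly of_int P) x \<in> biquad_field m n \<and>
     emb p q (poly (map_poly of_int P) x) = poly (map_poly of_int P) (emb p q x)" for P :: "int poly"
  proof (induction P)
    case 0 show ?case by (simp add: K_0 emb_0)
  next
    case (pCons a P)
    have e: "map_poly (of_int :: int \<Rightarrow> real) (pCons a P) = pCons (of_int a) (map_poly of_int P)"
      by (rule Polynomial.map_poly_pCons) simp
    have i: "of_int a + x * poly (map_poly of_int P) x \<in> biquad_field m n"
      using pCons.IH x by (intro K_add K_mult K_of_int) auto
    have "emb p q (of_int a + x * poly (map_poly of_int P) x)
        = of_int a + emb p q x * poly (map_poly of_int P) (emb p q x)"
      using pCons.IH x K_of_int[of a] K_mult[OF x, of "poly (map_poly of_int P) x"]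
      by (simp add: emb_add emb_mult emb_of_rat[of p q "of_int a", simplified])
    thus ?case unfolding e using i by simp
  qed
  obtain P where P: "lead_coeff P = 1" "poly (map_poly of_int P) x = 0"
    using ai unfolding algebraic_int_def by blast
  have "poly (map_poly of_int P) (emb p q x) = 0" using gen[of P] P(2) emb_0 by simp
  thus ?thesis unfolding algebraic_int_def using P(1) by blast
qed

definition nrm :: "real \<Rightarrow> real" where
  "nrm x = x * emb False True x * emb True False x * emb True True x"

lemma N1_qf: assumes "x \<in> biquad_field m n" shows "x * emb False True x \<in> quad_field m"
proof -
  obtain a b c d where x: "x = bq a b c d" using assms by (rule K_cases)
  have "x * emb False True x = bq (a * a + of_int m * b * b - of_int n * c * c - of_int m * of_int n * d * d)
       (2 * a * b - 2 * of_int n * c * d) 0 0"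
    unfolding x emb_bq bq_mult sg_def by (simp add: algebra_simps)
  thus ?thesis unfolding quad_field_def qf_m[symmetric] by blast
qed

lemma N2_qf: assumes "x \<in> biquad_field m n" shows "x * emb True False x \<in> quad_field n"
proof -
  obtain a b c d where x: "x = bq a b c d" using assms by (rule K_cases)
  have "x * emb True False x = bq (a * a - of_int m * b * b + of_int n * c * c - of_int m * of_int n * d * d)
       0 (2 * a * c - 2 * of_int m * b * d) 0"
    unfolding x emb_bq bq_mult sg_def by (simp add: algebra_simps)
  thus ?thesis unfolding quad_field_def qf_n[symmetric] by blast
qed

lemma N3_qf: assumes "x \<in> biquad_field m n" shows "x * emb True True x \<in> quad_field (m * n)"
proof -
  obtain a b c d where x: "x = bq a b c d" using assms by (rule K_cases)
  have "x * emb True True x = bq (a * a - of_int m * b * b - of_int n * c * c + of_int m * of_int n * d * d)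
       0 0 (2 * a * d - 2 * b * c)"
    unfolding x emb_bq bq_mult sg_def by (simp add: algebra_simps)
  thus ?thesis unfolding quad_field_def qf_mn[symmetric] by blast
qed

lemma nrm_eq: assumes "x \<in> biquad_field m n"
  shows "nrm x = (x * emb False True x) * emb True False (x * emb False True x)"
  using assms by (simp add: nrm_def emb_mult emb_in emb_emb mult.assoc)

lemma nrm_rat: assumes "x \<in> biquad_field m n" shows "\<exists>r. nrm x = of_rat r"
proof -
  obtain a b where "x * emb False True x = of_rat a + of_rat b * sqrt (of_int m)"
    using N1_qf[OF assms] unfolding quad_field_def by blast
  hence e: "x * emb False True x = bq a b 0 0" by (simp add: qf_m)
  have "nrm x = bq a b 0 0 * bq a (- b) 0 0" unfolding nrm_eq[OF assms] e emb_bq by (simp add: sg_def)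
  also have "\<dots> = of_rat (a * a - of_int m * b * b)" unfolding bq_mult bq_of_rat by simp
  finally show ?thesis by blast
qed

lemma K_inverse: assumes "x \<in> biquad_field m n" "x \<noteq> 0" shows "inverse x \<in> biquad_field m n"
proof -
  obtain r where r: "nrm x = of_rat r" using nrm_rat[OF assms(1)] by blast
  have "nrm x \<noteq> 0" unfolding nrm_def using emb_nz[OF assms] assms(2) by simp
  hence r0: "r \<noteq> 0" using r by simp
  let ?P = "emb False True x * emb True False x * emb True True x"
  have "x * ?P = of_rat r" using r unfolding nrm_def by (simp add: mult.assoc)
  hence "x * (?P * of_rat (inverse r)) = of_rat r * of_rat (inverse r)" by (simp add: mult.assoc[symmetric])
  also have "\<dots> = 1" using r0 by (simp add: of_rat_mult[symmetric])
  finally have "inverse x = ?P * of_rat (inverse r)" by (rule inverse_unique)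
  moreover have "?P * of_rat (inverse r) \<in> biquad_field m n"
    using assms(1) by (intro K_mult K_of_rat emb_in)
  ultimately show ?thesis by simp
qed

lemma emb_inverse: assumes "x \<in> biquad_field m n" "x \<noteq> 0"
  shows "emb p q (inverse x) = inverse (emb p q x)"
proof -
  have "emb p q x * emb p q (inverse x) = emb p q (x * inverse x)"
    using emb_mult[OF assms(1) K_inverse[OF assms]] by simp
  also have "\<dots> = 1" using assms emb_1 by simp
  finally have "inverse (emb p q x) = emb p q (inverse x)" by (rule inverse_unique)
  thus ?thesis by simp
qed

lemma K_powi: "x \<in> biquad_field m n \<Longrightarrow> x \<noteq> 0 \<Longrightarrow> x powi k \<in> biquad_field m n"
  unfolding power_int_def using K_power K_inverse by auto

lemma emb_powi: assumes "x \<in> biquad_field m n" "x \<noteq> 0" shows "emb p q (x powi k) = emb p q x powi k"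
proof (cases "k \<ge> 0")
  case True thus ?thesis unfolding power_int_def using emb_power[OF assms(1)] by simp
next
  case False
  have "emb p q (x powi k) = emb p q (inverse (x ^ nat (- k)))"
    using False unfolding power_int_def by (simp add: power_inverse)
  also have "\<dots> = inverse (emb p q (x ^ nat (- k)))"
    using assms by (intro emb_inverse K_power) auto
  also have "\<dots> = emb p q x powi k"
    using False unfolding power_int_def emb_power[OF assms(1)] by (simp add: power_inverse)
  finally show ?thesis .
qed

abbreviation "E \<equiv> units_of (biquad_field m n)"

lemma E_mult: "u \<in> E \<Longrightarrow> v \<in> E \<Longrightarrow> u * v \<in> E"
  unfolding Defs.units_of_def by (auto intro: K_mult ai_mult simp: mult.commute)

lemma E_inverse: "u \<in> E \<Longrightarrow> inverse u \<in> E"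
  unfolding Defs.units_of_def by (auto intro: K_inverse)

lemma E_1: "1 \<in> E" unfolding Defs.units_of_def using K_1 ai_iff by simp

lemma E_minus1: "-1 \<in> E" unfolding Defs.units_of_def using K_1 K_uminus ai_minus1 by simp

lemma E_power: "u \<in> E \<Longrightarrow> u ^ k \<in> E"
  by (induction k) (auto intro: E_mult E_1)

lemma E_powi: "u \<in> E \<Longrightarrow> u powi k \<in> E"
  unfolding power_int_def using E_power E_inverse by auto

lemma E_emb: assumes "u \<in> E" shows "emb p q u \<in> E"
proof -
  have u: "u \<in> biquad_field m n" "u \<noteq> 0" "algebraic_int u" "algebraic_int (inverse u)"
    using assms unfolding Defs.units_of_def by auto
  show ?thesis unfolding Defs.units_of_def
    using u emb_in emb_nz ai_emb emb_inverse[OF u(1,2)] ai_emb[OF K_inverse[OF u(1,2)] u(4)] by auto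
qed

lemma E_K: "u \<in> E \<Longrightarrow> u \<in> biquad_field m n" and E_nz: "u \<in> E \<Longrightarrow> u \<noteq> 0"
  unfolding Defs.units_of_def by auto

lemma qf_units_m: "units_of (quad_field m) \<subseteq> E"
  using qf_m_sub unfolding Defs.units_of_def by auto
lemma qf_units_n: "units_of (quad_field n) \<subseteq> E"
  using qf_n_sub unfolding Defs.units_of_def by auto
lemma qf_units_mn: "units_of (quad_field (m * n)) \<subseteq> E"
  using qf_mn_sub unfolding Defs.units_of_def by auto

lemma N_unit:
  assumes u: "u \<in> E" and qf: "u * emb p q u \<in> quad_field k"
  shows "u * emb p q u \<in> units_of (quad_field k)"
proof -
  have v: "emb p q u \<in> E" by (rule E_emb[OF u])
  have "u * emb p q u \<in> E" using E_mult[OF u v] .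
  thus ?thesis using qf unfolding Defs.units_of_def by auto
qed

end


lemma m1_powi: "(-1::real) powi k = (if even k then 1 else -1)"
  using power_int_minus_left[of "1::real" k] by simp

lemma neg_powi: "(- x :: real) powi k = (-1) powi k * x powi k"
proof -
  have "(- x) powi k = ((-1) * x) powi k" by simp
  also have "\<dots> = (-1) powi k * x powi k" by (rule power_int_mult_distrib)
  finally show ?thesis .
qed

lemma powi_double: assumes "(x::real) \<noteq> 0" shows "x powi (2 * a) = x powi a * x powi a"
proof -
  have "x powi (2 * a) = x powi (a + a)" by (simp only: mult_2)
  also have "\<dots> = x powi a * x powi a" by (rule power_int_add) (use assms in simp)
  finally show ?thesis .
qed

lemma powi_double1: assumes "(x::real) \<noteq> 0" shows "x powi (2 * a + 1) = x powi a * x powi a * x"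
proof -
  have "x powi (2 * a + 1) = x powi (2 * a) * x powi 1" by (rule power_int_add) (use assms in simp)
  thus ?thesis using powi_double[OF assms, of a] by simp
qed

locale biq_units = biq +
  fixes e1 e2 e3 :: real
  assumes f1: "fundamental_unit m e1" and f2: "fundamental_unit n e2" and f3: "fundamental_unit (m * n) e3"
    and nm1: "quad_norm m e1 = -1" and nm2: "quad_norm n e2 = -1" and nm3: "quad_norm (m * n) e3 = -1"
begin

definition eta where "eta = sqrt (e1 * e2 * e3)"

lemma e1_u: "e1 \<in> units_of (quad_field m)" and e1_gt: "e1 > 1"
  and e1_all: "units_of (quad_field m) = {s * e1 powi k | s k. s \<in> {1, -1}}"
  using f1 unfolding fundamental_unit_def by auto
lemma e2_u: "e2 \<in> units_of (quad_field n)" and e2_gt: "e2 > 1"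
  and e2_all: "units_of (quad_field n) = {s * e2 powi k | s k. s \<in> {1, -1}}"
  using f2 unfolding fundamental_unit_def by auto
lemma e3_u: "e3 \<in> units_of (quad_field (m * n))" and e3_gt: "e3 > 1"
  and e3_all: "units_of (quad_field (m * n)) = {s * e3 powi k | s k. s \<in> {1, -1}}"
  using f3 unfolding fundamental_unit_def by auto

lemma e1_E: "e1 \<in> E" using e1_u qf_units_m by blast
lemma e2_E: "e2 \<in> E" using e2_u qf_units_n by blast
lemma e3_E: "e3 \<in> E" using e3_u qf_units_mn by blast
lemma e_K: "e1 \<in> biquad_field m n" "e2 \<in> biquad_field m n" "e3 \<in> biquad_field m n"
  using e1_E e2_E e3_E E_K by auto
lemma e_nz: "e1 \<noteq> 0" "e2 \<noteq> 0" "e3 \<noteq> 0" using e1_gt e2_gt e3_gt by auto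
lemma e_pos: "e1 > 0" "e2 > 0" "e3 > 0" using e1_gt e2_gt e3_gt by auto

lemma conj_inv: assumes "x * quad_conj k x = -1" "x \<noteq> 0" shows "quad_conj k x = - inverse x"
proof -
  have "x * (- quad_conj k x) = 1" using assms(1) by simp
  hence "inverse x = - quad_conj k x" by (rule inverse_unique)
  thus ?thesis by simp
qed

lemma emb_e1: "emb p q e1 = (if p then - inverse e1 else e1)"
proof -
  have "e1 \<in> quad_field m" using e1_u unfolding Defs.units_of_def by simp
  thus ?thesis using emb_qf_m conj_inv[OF nm1[unfolded quad_norm_def] e_nz(1)] by simp
qed
lemma emb_e2: "emb p q e2 = (if q then - inverse e2 else e2)"
proof -
  have "e2 \<in> quad_field n" using e2_u unfolding Defs.units_of_def by simp
  thus ?thesis using emb_qf_n conj_inv[OF nm2[unfolded quad_norm_def] e_nz(2)] by simp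
qed
lemma emb_e3: "emb p q e3 = (if p \<noteq> q then - inverse e3 else e3)"
proof -
  have "e3 \<in> quad_field (m * n)" using e3_u unfolding Defs.units_of_def by simp
  thus ?thesis using emb_qf_mn conj_inv[OF nm3[unfolded quad_norm_def] e_nz(3)] by simp
qed

lemma sgn_K: "s \<in> {1, -1} \<Longrightarrow> s \<in> biquad_field m n" using K_1 K_uminus by auto
lemma emb_sgn: "s \<in> {1, -1} \<Longrightarrow> emb p q s = s" using emb_1 emb_uminus K_1 by auto

lemma emb_gen:
  assumes "s \<in> {1, -1}"
  shows "emb p q (s * e1 powi k1 * e2 powi k2 * e3 powi k3)
       = s * emb p q e1 powi k1 * emb p q e2 powi k2 * emb p q e3 powi k3"
proof -
  have K: "e1 powi k1 \<in> biquad_field m n" "e2 powi k2 \<in> biquad_field m n" "e3 powi k3 \<in> biquad_field m n"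
    using K_powi e_K e_nz by auto
  have sK: "s \<in> biquad_field m n" using sgn_K[OF assms] .
  show ?thesis
    using K sK K_mult emb_mult emb_sgn[OF assms] emb_powi e_K e_nz by simp
qed

lemma N_form:
  assumes "u \<in> E"
  shows "\<exists>s k. s \<in> {1, -1} \<and> u * emb False True u = s * e1 powi k"
    and "\<exists>s k. s \<in> {1, -1} \<and> u * emb True False u = s * e2 powi k"
    and "\<exists>s k. s \<in> {1, -1} \<and> u * emb True True u = s * e3 powi k"
proof -
  show "\<exists>s k. s \<in> {1, -1} \<and> u * emb False True u = s * e1 powi k"
    using N_unit[OF assms N1_qf[OF E_K[OF assms]]] unfolding e1_all by blast
  show "\<exists>s k. s \<in> {1, -1} \<and> u * emb True False u = s * e2 powi k"
    using N_unit[OF assms N2_qf[OF E_K[OF assms]]] unfolding e2_all by blast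
  show "\<exists>s k. s \<in> {1, -1} \<and> u * emb True True u = s * e3 powi k"
    using N_unit[OF assms N3_qf[OF E_K[OF assms]]] unfolding e3_all by blast
qed

lemma nrm_unit:
  assumes u: "u \<in> E" and s: "s \<in> {1, -1}" and N1: "u * emb False True u = s * e1 powi k"
  shows "nrm u = (-1) powi k"
proof -
  have "emb True False (s * e1 powi k) = s * (- inverse e1) powi k"
    using emb_mult[OF sgn_K[OF s] K_powi[OF e_K(1) e_nz(1)]] emb_sgn[OF s] emb_powi[OF e_K(1) e_nz(1)] emb_e1
    by simp
  hence "nrm u = (s * e1 powi k) * (s * (- inverse e1) powi k)"
    using nrm_eq[OF E_K[OF u]] N1 by simp
  also have "\<dots> = (s * s) * (e1 * (- inverse e1)) powi k"
    by (simp only: power_int_mult_distrib mult_ac)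
  also have "\<dots> = (-1) powi k" using s e_nz(1) by auto
  finally show ?thesis .
qed

lemma sq_form:
  assumes u: "u \<in> E"
  shows "\<exists>s k1 k2 k3. s \<in> {1, -1} \<and> u ^ 2 = s * e1 powi k1 * e2 powi k2 * e3 powi k3"
proof -
  obtain s1 k1 where 1: "s1 \<in> {1, -1}" "u * emb False True u = s1 * e1 powi k1" using N_form(1)[OF u] by blast
  obtain s2 k2 where 2: "s2 \<in> {1, -1}" "u * emb True False u = s2 * e2 powi k2" using N_form(2)[OF u] by blast
  obtain s3 k3 where 3: "s3 \<in> {1, -1}" "u * emb True True u = s3 * e3 powi k3" using N_form(3)[OF u] by blast
  have nr: "nrm u = (-1) powi k1" using nrm_unit[OF u 1] .
  have "(u * emb False True u) * (u * emb True False u) * (u * emb True True u) = u ^ 2 * nrm u"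
    unfolding nrm_def by (simp add: power2_eq_square algebra_simps)
  hence "u ^ 2 * (-1) powi k1 = (s1 * e1 powi k1) * (s2 * e2 powi k2) * (s3 * e3 powi k3)"
    using 1 2 3 nr by simp
  hence "u ^ 2 * (-1) powi k1 * (-1) powi k1 = (s1 * e1 powi k1) * (s2 * e2 powi k2) * (s3 * e3 powi k3) * (-1) powi k1"
    by simp
  hence "u ^ 2 = ((-1) powi k1 * s1 * s2 * s3) * e1 powi k1 * e2 powi k2 * e3 powi k3"
    by (simp add: algebra_simps)
  moreover have "(-1) powi k1 * s1 * s2 * s3 \<in> {1, -1}"
    using 1(1) 2(1) 3(1) m1_powi[of k1] by auto
  ultimately show ?thesis by blast
qed

lemma sq_parity:
  assumes u: "u \<in> E" and s: "s \<in> {1, -1}" and eq: "u ^ 2 = s * e1 powi k1 * e2 powi k2 * e3 powi k3"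
  shows "s = 1" "even k1 \<longleftrightarrow> even k3" "even k2 \<longleftrightarrow> even k3"
proof -
  have pos: "s * emb p q e1 powi k1 * emb p q e2 powi k2 * emb p q e3 powi k3 > 0" for p q
  proof -
    have "emb p q u \<noteq> 0" using emb_nz E_K[OF u] E_nz[OF u] by simp
    hence "emb p q (u ^ 2) > 0" using emb_power[OF E_K[OF u]] by simp
    thus ?thesis unfolding eq emb_gen[OF s] .
  qed
  have P: "0 < e1 powi k1 * e2 powi k2 * e3 powi k3" using e_pos by simp
  have "0 < s * (e1 powi k1 * e2 powi k2 * e3 powi k3)"
    using pos[of False False] unfolding emb_e1 emb_e2 emb_e3 by (simp add: mult.assoc)
  hence "s > 0" using P by (simp add: zero_less_mult_iff)
  thus s1: "s = 1" using s by auto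
  have P2: "0 < inverse e1 powi k1 * e2 powi k2 * inverse e3 powi k3" using e_pos by simp
  have "s * emb True False e1 powi k1 * emb True False e2 powi k2 * emb True False e3 powi k3
     = ((-1) powi k1 * (-1) powi k3) * (inverse e1 powi k1 * e2 powi k2 * inverse e3 powi k3)"
  proof -
    have a: "emb True False e1 powi k1 = (-1) powi k1 * inverse e1 powi k1"
      unfolding emb_e1 if_True by (rule neg_powi)
    have b: "emb True False e2 powi k2 = e2 powi k2" unfolding emb_e2 by simp
    have c: "emb True False e3 powi k3 = (-1) powi k3 * inverse e3 powi k3"
      unfolding emb_e3 by (simp only: simp_thms if_True) (rule neg_powi)
    show ?thesis unfolding a b c s1 by (simp only: mult_1_left mult_ac)
  qed
  hence "0 < ((-1) powi k1 * (-1) powi k3) * (inverse e1 powi k1 * e2 powi k2 * inverse e3 powi k3)"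
    using pos[of True False] by simp
  hence "0 < (-1::real) powi k1 * (-1) powi k3" using P2 by (simp add: zero_less_mult_iff)
  thus "even k1 \<longleftrightarrow> even k3" unfolding m1_powi by (auto split: if_splits)
  have P3: "0 < e1 powi k1 * inverse e2 powi k2 * inverse e3 powi k3" using e_pos by simp
  have "s * emb False True e1 powi k1 * emb False True e2 powi k2 * emb False True e3 powi k3
     = ((-1) powi k2 * (-1) powi k3) * (e1 powi k1 * inverse e2 powi k2 * inverse e3 powi k3)"
  proof -
    have a: "emb False True e1 powi k1 = e1 powi k1" unfolding emb_e1 by simp
    have b: "emb False True e2 powi k2 = (-1) powi k2 * inverse e2 powi k2"
      unfolding emb_e2 if_True by (rule neg_powi)
    have c: "emb False True e3 powi k3 = (-1) powi k3 * inverse e3 powi k3"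
      unfolding emb_e3 by (simp only: simp_thms if_True) (rule neg_powi)
    show ?thesis unfolding a b c s1 by (simp only: mult_1_left mult_ac)
  qed
  hence "0 < ((-1) powi k2 * (-1) powi k3) * (e1 powi k1 * inverse e2 powi k2 * inverse e3 powi k3)"
    using pos[of False True] by simp
  hence "0 < (-1::real) powi k2 * (-1) powi k3" using P3 by (simp add: zero_less_mult_iff)
  thus "even k2 \<longleftrightarrow> even k3" unfolding m1_powi by (auto split: if_splits)
qed

lemma unit_decomp:
  assumes u: "u \<in> E"
  shows "(\<exists>i a b c. u = (-1) powi i * e1 powi a * e2 powi b * e3 powi c) \<or>
         (eta \<in> biquad_field m n \<and> (\<exists>i a b c. u = (-1) powi i * e1 powi a * e2 powi b * e3 powi c * eta))"
proof -
  obtain s k1 k2 k3 where s: "s \<in> {1, -1}" and eq: "u ^ 2 = s * e1 powi k1 * e2 powi k2 * e3 powi k3"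
    using sq_form[OF u] by blast
  note par = sq_parity[OF u s eq]
  have eq1: "u ^ 2 = e1 powi k1 * e2 powi k2 * e3 powi k3" using eq par(1) by simp
  show ?thesis
  proof (cases "even k3")
    case True
    then obtain a1 a2 a3 where k: "k1 = 2 * a1" "k2 = 2 * a2" "k3 = 2 * a3" using par by (meson evenE)
    define w where "w = e1 powi a1 * e2 powi a2 * e3 powi a3"
    have "u ^ 2 = w ^ 2" unfolding eq1 w_def k powi_double[OF e_nz(1)] powi_double[OF e_nz(2)] powi_double[OF e_nz(3)]
      by (simp add: power2_eq_square algebra_simps)
    hence "u = w \<or> u = - w" by (simp add: power2_eq_iff)
    hence "u = (-1) powi 0 * e1 powi a1 * e2 powi a2 * e3 powi a3 \<or> u = (-1) powi 1 * e1 powi a1 * e2 powi a2 * e3 powi a3"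
      unfolding w_def by auto
    thus ?thesis by blast
  next
    case False
    then obtain a1 a2 a3 where k: "k1 = 2 * a1 + 1" "k2 = 2 * a2 + 1" "k3 = 2 * a3 + 1" using par by (meson oddE)
    define w where "w = e1 powi a1 * e2 powi a2 * e3 powi a3"
    have w0: "w \<noteq> 0" unfolding w_def using e_nz by simp
    have wE: "w \<in> E" unfolding w_def using e1_E e2_E e3_E by (intro E_mult E_powi)
    have "u ^ 2 = (e1 * e2 * e3) * w ^ 2" unfolding eq1 w_def k powi_double1[OF e_nz(1)] powi_double1[OF e_nz(2)] powi_double1[OF e_nz(3)]
      by (simp add: power2_eq_square algebra_simps)
    hence "(u * inverse w) ^ 2 = e1 * e2 * e3" using w0 by (simp add: power_mult_distrib power_inverse field_simps)
    hence "eta = \<bar>u * inverse w\<bar>" unfolding eta_def by (metis real_sqrt_abs)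
    hence et: "eta = u * inverse w \<or> eta = - (u * inverse w)" by (auto simp: abs_if)
    have vK: "u * inverse w \<in> biquad_field m n" using E_mult[OF u E_inverse[OF wE]] E_K by blast
    have etaK: "eta \<in> biquad_field m n" using et vK K_uminus by auto
    have "u = eta * w \<or> u = - (eta * w)" using et w0 by (auto simp: field_simps)
    hence "u = (-1) powi 0 * e1 powi a1 * e2 powi a2 * e3 powi a3 * eta \<or> u = (-1) powi 1 * e1 powi a1 * e2 powi a2 * e3 powi a3 * eta"
      unfolding w_def by (auto simp: algebra_simps)
    thus ?thesis using etaK by blast
  qed
qed

end


interpretation f2: vector_space "f2_scale :: bit \<Rightarrow> ((real \<Rightarrow> real) \<Rightarrow> bit) \<Rightarrow> ((real \<Rightarrow> real) \<Rightarrow> bit)"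
  by (rule f2_vector_space)

lemma phi_span:
  fixes \<phi> :: "((real \<Rightarrow> real) \<Rightarrow> bit) \<Rightarrow> bit"
  assumes lin: "\<And>c x y. \<phi> (f2_scale c x + y) = c * \<phi> x + \<phi> y" and z: "\<phi> 0 = 0"
    and S: "\<And>v. v \<in> S \<Longrightarrow> \<phi> v = 0" and v: "v \<in> f2.span S"
  shows "\<phi> v = 0"
  using v
proof (induction rule: f2.span_induct_alt)
  case base show ?case by (rule z)
next
  case (step c x y)
  have "\<phi> (f2_scale c x + y) = c * \<phi> x + \<phi> y" by (rule lin)
  also have "\<dots> = 0" using S[OF step(1)] step(2) by simp
  finally show ?case .
qed

definition bn :: "real \<Rightarrow> bit" where "bn x = (if x < 0 then 1 else 0)"

lemma bn_mult: "x \<noteq> 0 \<Longrightarrow> y \<noteq> 0 \<Longrightarrow> bn (x * y) = bn x + bn y"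
  unfolding bn_def by (auto simp: mult_less_0_iff)

lemma bn_inverse: "bn (inverse x) = bn x" unfolding bn_def by simp

lemma bit_self: "(a::bit) + a = 0" by simp

context biq
begin

lemma sig_emb: "signature (biquad_field m n) x (emb p q) = bn (emb p q x)"
  unfolding signature_def bn_def using emb_embedding by simp

lemma sig_out: "\<sigma> \<notin> real_embeddings (biquad_field m n) \<Longrightarrow> signature (biquad_field m n) x \<sigma> = 0"
  unfolding signature_def by simp

lemma sig_ext:
  assumes "\<And>p q. f (emb p q) = g (emb p q)"
    and "\<And>\<sigma>. \<sigma> \<notin> real_embeddings (biquad_field m n) \<Longrightarrow> f \<sigma> = g \<sigma>"
  shows "f = g"
proof
  fix \<sigma> show "f \<sigma> = g \<sigma>"
  proof (cases "\<sigma> \<in> real_embeddings (biquad_field m n)")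
    case True then obtain p q where "\<sigma> = emb p q" using embedding_is_emb by blast
    thus ?thesis using assms(1) by simp
  qed (use assms(2) in auto)
qed

lemma sig_mult:
  assumes "x \<in> biquad_field m n" "x \<noteq> 0" "y \<in> biquad_field m n" "y \<noteq> 0"
  shows "signature (biquad_field m n) (x * y) = signature (biquad_field m n) x + signature (biquad_field m n) y"
  by (rule sig_ext) (use assms in \<open>simp_all add: sig_emb sig_out emb_mult emb_nz bn_mult\<close>)

lemma sig_1: "signature (biquad_field m n) 1 = 0"
  by (rule sig_ext) (simp_all add: sig_emb sig_out emb_1 bn_def)

lemma sig_inverse:
  assumes "x \<in> biquad_field m n" "x \<noteq> 0"
  shows "signature (biquad_field m n) (inverse x) = signature (biquad_field m n) x"
  by (rule sig_ext) (use assms in \<open>simp_all add: sig_emb sig_out emb_inverse bn_inverse\<close>)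

lemma sig_power:
  assumes "x \<in> biquad_field m n" "x \<noteq> 0"
  shows "signature (biquad_field m n) (x ^ k) = (if even k then 0 else signature (biquad_field m n) x)"
proof (induction k)
  case 0 thus ?case by (simp add: sig_1)
next
  case (Suc k)
  have "signature (biquad_field m n) (x ^ Suc k) = signature (biquad_field m n) x + signature (biquad_field m n) (x ^ k)"
    using sig_mult[OF assms K_power[OF assms(1)], of k] assms(2) by simp
  thus ?case using Suc by (auto simp: fun_eq_iff)
qed

lemma sig_powi:
  assumes "x \<in> biquad_field m n" "x \<noteq> 0"
  shows "signature (biquad_field m n) (x powi k) = (if even k then 0 else signature (biquad_field m n) x)"
proof (cases "k \<ge> 0")
  case True thus ?thesis unfolding power_int_def using sig_power[OF assms, of "nat k"] by (simp add: even_nat_iff)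
next
  case False
  have i: "inverse x \<in> biquad_field m n" "inverse x \<noteq> 0" using K_inverse assms by auto
  show ?thesis using False unfolding power_int_def using sig_power[OF i, of "nat (- k)"] sig_inverse[OF assms]
    by (simp add: even_nat_iff)
qed

lemma sig_powi_span:
  assumes "x \<in> biquad_field m n" "x \<noteq> 0" "signature (biquad_field m n) x \<in> f2.span S"
  shows "signature (biquad_field m n) (x powi k) \<in> f2.span S"
  using sig_powi[OF assms(1,2)] assms(3) f2.span_zero by simp

end

context biq_units
begin

abbreviation "sg' \<equiv> signature (biquad_field m n)"

lemma v0: "sg' (-1) (emb p q) = 1" unfolding sig_emb using emb_uminus[OF K_1] emb_1 by (simp add: bn_def)
lemma v1: "sg' e1 (emb p q) = (if p then 1 else 0)" unfolding sig_emb emb_e1 bn_def using e_pos by simp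
lemma v2: "sg' e2 (emb p q) = (if q then 1 else 0)" unfolding sig_emb emb_e2 bn_def using e_pos by simp
lemma e_nneg: "\<not> e1 < 0" "\<not> e2 < 0" "\<not> e3 < 0" using e_pos by auto

lemma v3: "sg' e3 = sg' e1 + sg' e2"
  by (rule sig_ext) (auto simp: sig_emb sig_out emb_e1 emb_e2 emb_e3 bn_def e_pos e_nneg)

lemma lin1: "(\<lambda>f. f \<sigma>) (f2_scale c x + y) = c * (\<lambda>f. f \<sigma>) x + (\<lambda>f. f \<sigma>) y"
  by (simp add: f2_scale_def)

lemma eta_sq: "eta * eta = e1 * e2 * e3"
  unfolding eta_def using e_pos by (simp add: mult_pos_pos)

lemma eta_pos: "eta > 0" unfolding eta_def using e_pos by simp

lemma eta_E: assumes "eta \<in> biquad_field m n" shows "eta \<in> E"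
proof -
  have "algebraic_int (e1 * e2 * e3)" using e1_E e2_E e3_E unfolding Defs.units_of_def by (auto intro: ai_mult)
  hence a: "algebraic_int eta" unfolding eta_def by (rule ai_sqrt)
  have "algebraic_int (inverse e1 * inverse e2 * inverse e3)"
    using e1_E e2_E e3_E unfolding Defs.units_of_def by (auto intro: ai_mult)
  hence "algebraic_int (sqrt (inverse e1 * inverse e2 * inverse e3))" by (rule ai_sqrt)
  hence b: "algebraic_int (inverse eta)" unfolding eta_def by (simp add: real_sqrt_inverse[symmetric])
  show ?thesis unfolding Defs.units_of_def using assms a b eta_pos by simp
qed

lemma nrm_eta: assumes "eta \<in> biquad_field m n" shows "nrm eta = -1"
proof -
  let ?N = "eta * emb False True eta"
  have etaK: "eta \<in> biquad_field m n" by fact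
  have "emb False True (eta * eta) = emb False True (e1 * e2 * e3)" using eta_sq by simp
  hence "emb False True eta * emb False True eta = e1 * (- inverse e2) * (- inverse e3)"
    using emb_mult[OF etaK etaK] emb_mult e_K K_mult emb_e1 emb_e2 emb_e3 by simp
  hence "?N * ?N = (eta * eta) * (e1 * (- inverse e2) * (- inverse e3))" by (simp add: algebra_simps)
  also have "\<dots> = e1 * e1" unfolding eta_sq using e_nz by (simp add: field_simps)
  finally have "?N = e1 \<or> ?N = - e1" using power2_eq_iff[of ?N e1] by (simp add: power2_eq_square)
  moreover have "nrm eta = ?N * emb True False ?N" by (rule nrm_eq[OF etaK])
  ultimately show ?thesis using emb_e1 emb_uminus e_K e_nz by auto
qed

lemma v4_odd: assumes "eta \<in> biquad_field m n"
  shows "sg' eta (emb False False) + sg' eta (emb False True) + sg' eta (emb True False) + sg' eta (emb True True) = 1"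
proof -
  have nz: "emb p q eta \<noteq> 0" for p q using emb_nz[OF assms] eta_pos by simp
  have "bn (nrm eta) = 1" using nrm_eta[OF assms] by (simp add: bn_def)
  moreover have "bn (nrm eta) = bn eta + bn (emb False True eta) + bn (emb True False eta) + bn (emb True True eta)"
    unfolding nrm_def using nz[of False False] nz emb_FF[OF assms] by (simp add: bn_mult)
  ultimately show ?thesis unfolding sig_emb emb_FF[OF assms] by simp
qed

end


lemma phi1_lin: "(\<lambda>f. f a) (f2_scale c x + y) = c * (\<lambda>f. f a) x + (\<lambda>f. f a) y"
  by (simp only: f2_scale_def plus_fun_apply)

lemma phi2_lin: "(\<lambda>f. f a + f b) (f2_scale c x + y) = c * (\<lambda>f. f a + f b) x + (\<lambda>f. f a + f b) y"
  by (simp only: f2_scale_def plus_fun_apply distrib_left add_ac)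

lemma phi4_lin: "(\<lambda>f. f a + f b + f d + f e) (f2_scale c x + y) = c * (\<lambda>f. f a + f b + f d + f e) x + (\<lambda>f. f a + f b + f d + f e) y"
  by (simp only: f2_scale_def plus_fun_apply distrib_left add_ac)

context biq_units
begin

lemma m1K: "-1 \<in> biquad_field m n" using K_uminus[OF K_1] .

lemma sig4:
  assumes "a \<in> biquad_field m n" "a \<noteq> 0" "b \<in> biquad_field m n" "b \<noteq> 0"
    "c \<in> biquad_field m n" "c \<noteq> 0" "d \<in> biquad_field m n" "d \<noteq> 0"
    and sp: "sg' a \<in> f2.span S" "sg' b \<in> f2.span S" "sg' c \<in> f2.span S" "sg' d \<in> f2.span S"
  shows "sg' (a powi i * b powi j * c powi k * d powi l) \<in> f2.span S"
proof -
  have K: "a powi i \<in> biquad_field m n" "b powi j \<in> biquad_field m n" "c powi k \<in> biquad_field m n"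
    "d powi l \<in> biquad_field m n" using K_powi assms by auto
  have Z: "a powi i \<noteq> 0" "b powi j \<noteq> 0" "c powi k \<noteq> 0" "d powi l \<noteq> 0" using assms by auto
  have K2: "a powi i * b powi j \<in> biquad_field m n" "a powi i * b powi j * c powi k \<in> biquad_field m n"
    using K K_mult by auto
  have "sg' (a powi i * b powi j * c powi k * d powi l)
     = sg' (a powi i) + sg' (b powi j) + sg' (c powi k) + sg' (d powi l)"
    using sig_mult K K2 Z by simp
  also have "\<dots> \<in> f2.span S"
    using sig_powi_span assms by (intro f2.span_add) auto
  finally show ?thesis .
qed

lemma G1_sub_E: "gen4 (-1) e1 e2 e3 \<subseteq> E"
  unfolding gen4_def using e1_E e2_E e3_E E_minus1 by (auto intro!: E_mult E_powi)

lemma G2_sub_E: "eta \<in> biquad_field m n \<Longrightarrow> gen4 (-1) e1 e2 eta \<subseteq> E"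
  unfolding gen4_def using e1_E e2_E eta_E E_minus1 by (auto intro!: E_mult E_powi)

lemma E_sub_G1: "eta \<notin> biquad_field m n \<Longrightarrow> E \<subseteq> gen4 (-1) e1 e2 e3"
  unfolding gen4_def using unit_decomp by blast

lemma eps3_eq: "e3 powi c = e1 powi (-c) * e2 powi (-c) * eta powi (2 * c)"
proof -
  have eta0: "eta \<noteq> 0" using eta_pos by simp
  have "eta powi (2 * c) = (eta * eta) powi c" unfolding powi_double[OF eta0] power_int_mult_distrib ..
  also have "\<dots> = e1 powi c * e2 powi c * e3 powi c" unfolding eta_sq power_int_mult_distrib ..
  finally have "e1 powi (-c) * e2 powi (-c) * eta powi (2 * c)
      = (inverse (e1 powi c) * e1 powi c) * (inverse (e2 powi c) * e2 powi c) * e3 powi c"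
    unfolding power_int_minus by (simp add: algebra_simps)
  also have "\<dots> = e3 powi c" using e_nz by simp
  finally show ?thesis by simp
qed

lemma powi_sub: "(x::real) \<noteq> 0 \<Longrightarrow> x powi a * x powi (- c) = x powi (a - c)"
  using power_int_add[of x a "- c"] by simp

lemma E_sub_G2: assumes "eta \<in> biquad_field m n" shows "E \<subseteq> gen4 (-1) e1 e2 eta"
proof
  fix u assume u: "u \<in> E"
  have eta0: "eta \<noteq> 0" using eta_pos by simp
  have key: "(-1) powi i * e1 powi a * e2 powi b * e3 powi c
      = (-1) powi i * e1 powi (a - c) * e2 powi (b - c) * eta powi (2 * c)" for i a b c
  proof -
    have "(-1) powi i * e1 powi a * e2 powi b * e3 powi c
        = (-1) powi i * (e1 powi a * e1 powi (-c)) * (e2 powi b * e2 powi (-c)) * eta powi (2 * c)"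
      unfolding eps3_eq by (simp add: algebra_simps)
    thus ?thesis unfolding powi_sub[OF e_nz(1)] powi_sub[OF e_nz(2)] .
  qed
  have key2: "eta powi (2 * c) * eta = eta powi (2 * c + 1)" for c
    using power_int_add[of eta "2 * c" 1] eta0 by simp
  from unit_decomp[OF u] show "u \<in> gen4 (-1) e1 e2 eta"
  proof
    assume "\<exists>i a b c. u = (-1) powi i * e1 powi a * e2 powi b * e3 powi c"
    then obtain i a b c where "u = (-1) powi i * e1 powi a * e2 powi b * e3 powi c" by blast
    hence "u = (-1) powi i * e1 powi (a - c) * e2 powi (b - c) * eta powi (2 * c)" unfolding key .
    thus ?thesis unfolding gen4_def by blast
  next
    assume "eta \<in> biquad_field m n \<and> (\<exists>i a b c. u = (-1) powi i * e1 powi a * e2 powi b * e3 powi c * eta)"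
    then obtain i a b c where "u = (-1) powi i * e1 powi a * e2 powi b * e3 powi c * eta" by blast
    hence "u = (-1) powi i * e1 powi (a - c) * e2 powi (b - c) * (eta powi (2 * c) * eta)"
      unfolding key by (simp add: algebra_simps)
    hence "u = (-1) powi i * e1 powi (a - c) * e2 powi (b - c) * eta powi (2 * c + 1)" unfolding key2 .
    thus ?thesis unfolding gen4_def by blast
  qed
qed

lemma v0': "sg' (-1) (emb p q) = 1" by (rule v0)

lemma B3_indep: "f2.independent {sg' (-1), sg' e1, sg' e2}"
  and B3_card: "card {sg' (-1), sg' e1, sg' e2} = 3"
proof -
  have d12: "sg' e1 \<noteq> sg' e2" using v1[of True False] v2[of True False] by auto
  have d01: "sg' (-1) \<noteq> sg' e1" using v0[of False False] v1[of False False] by auto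
  have d02: "sg' (-1) \<noteq> sg' e2" using v0[of False False] v2[of False False] by auto
  have n2: "sg' e2 \<noteq> 0" using v2[of False True] by auto
  have i2: "f2.independent {sg' e2}" using n2 by (simp add: f2.independent_insert)
  have "sg' e1 \<notin> f2.span {sg' e2}"
  proof
    assume "sg' e1 \<in> f2.span {sg' e2}"
    hence "(\<lambda>f. f (emb False False) + f (emb True False)) (sg' e1) = 0"
      by (intro phi_span[OF phi2_lin[where a = "emb False False" and b = "emb True False"], where S = "{sg' e2}" and v = "sg' e1"])
        (auto simp: v2)
    thus False by (simp add: v1)
  qed
  hence i12: "f2.independent {sg' e1, sg' e2}" using i2 d12 by (simp add: f2.independent_insert)
  have "sg' (-1) \<notin> f2.span {sg' e1, sg' e2}"
  proof
    assume "sg' (-1) \<in> f2.span {sg' e1, sg' e2}"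
    hence "(\<lambda>f. f (emb False False)) (sg' (-1)) = 0"
      by (intro phi_span[OF phi1_lin[where a = "emb False False"], where S = "{sg' e1, sg' e2}" and v = "sg' (-1)"])
        (auto simp: v1 v2)
    thus False by (simp add: v0)
  qed
  thus "f2.independent {sg' (-1), sg' e1, sg' e2}" using i12 d01 d02 by (simp add: f2.independent_insert)
  show "card {sg' (-1), sg' e1, sg' e2} = 3" using d01 d02 d12 by simp
qed

lemma gen4_mem: "a powi i * b powi j * c powi k * d powi l \<in> gen4 a b c d"
  unfolding gen4_def by blast

lemma rank_G1: "f2.dim (sg' ` gen4 (-1) e1 e2 e3) = 3"
proof -
  let ?B = "{sg' (-1), sg' e1, sg' e2}"
  have spB: "sg' (-1) \<in> f2.span ?B" "sg' e1 \<in> f2.span ?B" "sg' e2 \<in> f2.span ?B"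
    by (auto intro: f2.span_base)
  have sp3: "sg' e3 \<in> f2.span ?B" unfolding v3 using spB by (intro f2.span_add)
  have "sg' ` gen4 (-1) e1 e2 e3 \<subseteq> f2.span ?B"
    unfolding gen4_def using sig4[OF m1K _ e_K(1) e_nz(1) e_K(2) e_nz(2) e_K(3) e_nz(3) spB sp3] by auto
  moreover have "?B \<subseteq> f2.span (sg' ` gen4 (-1) e1 e2 e3)"
  proof -
    have "-1 \<in> gen4 (-1) e1 e2 e3" using gen4_mem[of "-1" 1 e1 0 e2 0 e3 0] by simp
    moreover have "e1 \<in> gen4 (-1) e1 e2 e3" using gen4_mem[of "-1" 0 e1 1 e2 0 e3 0] by simp
    moreover have "e2 \<in> gen4 (-1) e1 e2 e3" using gen4_mem[of "-1" 0 e1 0 e2 1 e3 0] by simp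
    ultimately show ?thesis by (auto intro: f2.span_base)
  qed
  ultimately have "f2.span (sg' ` gen4 (-1) e1 e2 e3) = f2.span ?B" by (simp add: f2.span_eq)
  hence "f2.dim (sg' ` gen4 (-1) e1 e2 e3) = f2.dim ?B" by (metis f2.dim_span)
  also have "\<dots> = 3" using f2.dim_eq_card_independent[OF B3_indep] B3_card by simp
  finally show ?thesis .
qed

lemma rank_G2: assumes etaK: "eta \<in> biquad_field m n" shows "f2.dim (sg' ` gen4 (-1) e1 e2 eta) = 4"
proof -
  let ?B3 = "{sg' (-1), sg' e1, sg' e2}"
  let ?B = "insert (sg' eta) ?B3"
  have eta0: "eta \<noteq> 0" using eta_pos by simp
  have n4: "sg' eta \<notin> f2.span ?B3"
  proof
    assume "sg' eta \<in> f2.span ?B3"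
    hence "(\<lambda>f. f (emb False False) + f (emb False True) + f (emb True False) + f (emb True True)) (sg' eta) = 0"
      by (intro phi_span[OF phi4_lin[where a = "emb False False" and b = "emb False True" and d = "emb True False" and e = "emb True True"],
          where S = ?B3 and v = "sg' eta"]) (auto simp: v0 v1 v2)
    thus False using v4_odd[OF etaK] by simp
  qed
  have n4': "sg' eta \<notin> ?B3"
  proof
    assume "sg' eta \<in> ?B3"
    hence "sg' eta \<in> f2.span ?B3" by (rule f2.span_base)
    thus False using n4 by simp
  qed
  have ind: "f2.independent ?B" using n4 n4' B3_indep by (simp add: f2.independent_insert)
  have card: "card ?B = 4" using n4' B3_card by (simp add: card_insert_if)
  have spB: "sg' (-1) \<in> f2.span ?B" "sg' e1 \<in> f2.span ?B" "sg' e2 \<in> f2.span ?B" "sg' eta \<in> f2.span ?B"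
    by (auto intro: f2.span_base)
  have "sg' ` gen4 (-1) e1 e2 eta \<subseteq> f2.span ?B"
    unfolding gen4_def using sig4[OF m1K _ e_K(1) e_nz(1) e_K(2) e_nz(2) etaK eta0 spB] by auto
  moreover have "?B \<subseteq> f2.span (sg' ` gen4 (-1) e1 e2 eta)"
  proof -
    have "-1 \<in> gen4 (-1) e1 e2 eta" using gen4_mem[of "-1" 1 e1 0 e2 0 eta 0] by simp
    moreover have "e1 \<in> gen4 (-1) e1 e2 eta" using gen4_mem[of "-1" 0 e1 1 e2 0 eta 0] by simp
    moreover have "e2 \<in> gen4 (-1) e1 e2 eta" using gen4_mem[of "-1" 0 e1 0 e2 1 eta 0] by simp
    moreover have "eta \<in> gen4 (-1) e1 e2 eta" using gen4_mem[of "-1" 0 e1 0 e2 0 eta 1] by simp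
    ultimately show ?thesis by (auto intro: f2.span_base)
  qed
  ultimately have "f2.span (sg' ` gen4 (-1) e1 e2 eta) = f2.span ?B" by (simp add: f2.span_eq)
  hence "f2.dim (sg' ` gen4 (-1) e1 e2 eta) = f2.dim ?B" by (metis f2.dim_span)
  also have "\<dots> = 4" using f2.dim_eq_card_independent[OF ind] card by simp
  finally show ?thesis .
qed

lemma main:
  shows "(E = gen4 (-1) e1 e2 e3 \<longleftrightarrow> unit_signature_rank (biquad_field m n) = 3)
       \<and> (E = gen4 (-1) e1 e2 eta \<longleftrightarrow> unit_signature_rank (biquad_field m n) = 4)"
proof (cases "eta \<in> biquad_field m n")
  case False
  have EG: "E = gen4 (-1) e1 e2 e3" using G1_sub_E E_sub_G1[OF False] by blast
  have r: "unit_signature_rank (biquad_field m n) = 3" unfolding unit_signature_rank_def EG by (rule rank_G1)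
  have "eta \<in> gen4 (-1) e1 e2 eta" using gen4_mem[of "-1" 0 e1 0 e2 0 eta 1] by simp
  hence "E \<noteq> gen4 (-1) e1 e2 eta" using False E_K by blast
  thus ?thesis using EG r by simp
next
  case True
  have EG: "E = gen4 (-1) e1 e2 eta" using G2_sub_E[OF True] E_sub_G2[OF True] by blast
  have r: "unit_signature_rank (biquad_field m n) = 4" unfolding unit_signature_rank_def EG by (rule rank_G2[OF True])
  have "E \<noteq> gen4 (-1) e1 e2 e3"
  proof
    assume "E = gen4 (-1) e1 e2 e3"
    hence "unit_signature_rank (biquad_field m n) = 3" unfolding unit_signature_rank_def by (simp add: rank_G1)
    thus False using r by simp
  qed
  thus ?thesis using EG r by simp
qed

end


theorem proposition4p1:
  fixes m n :: int and \<epsilon>1 \<epsilon>2 \<epsilon>3 :: real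
  assumes "real_biquadratic m n"
    and "fundamental_unit m \<epsilon>1" and "fundamental_unit n \<epsilon>2" and "fundamental_unit (m * n) \<epsilon>3"
    and "quad_norm m \<epsilon>1 = -1" and "quad_norm n \<epsilon>2 = -1" and "quad_norm (m * n) \<epsilon>3 = -1"
  shows "(units_of (biquad_field m n) = gen4 (-1) \<epsilon>1 \<epsilon>2 \<epsilon>3
            \<longleftrightarrow> unit_signature_rank (biquad_field m n) = 3)
       \<and> (units_of (biquad_field m n) = gen4 (-1) \<epsilon>1 \<epsilon>2 (sqrt (\<epsilon>1 * \<epsilon>2 * \<epsilon>3))
            \<longleftrightarrow> unit_signature_rank (biquad_field m n) = 4)"
proof -
  have "biq_units m n \<epsilon>1 \<epsilon>2 \<epsilon>3"
    unfolding biq_units_def biq_def biq_units_axioms_def using assms by auto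
  then interpret b: biq_units m n \<epsilon>1 \<epsilon>2 \<epsilon>3 .
  show ?thesis using b.main unfolding b.eta_def .
qed

end
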